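(* Let $R$ be a finite local Frobenius ring with maximal ideal $M$, not a field and of odd characteristic, with a fixed primitive additive character $\psi$, and let $\tau$ be a non-primitive multiplicative character of $R$. Then for every $a\in R^\times$, $$\frac{1}{|M^\perp|}\sum_{b\in 1+M^\perp}|K_\tau(ab)|^2=|R|\,(1+\sigma(a)).$$
   Context: All rings are finite and commutative with identity; $R^\times$ is the unit group. $M^\perp=\{r\in R: rm=0\ \forall m\in M\}$. An additive character $(R,+)\to\mathbb{C}^*$ is primitive if the only ideal on which it is identically $1$ is $(0)$; $R$ is Frobenius if such a character exists. A multiplicative character is a homomorphism $R^\times\to\mathbb{C}^*$; its conductor is $R$ if it is trivial, and otherwise the largest ideal $I\subseteq M$ such that it is identically $1$ on $1+I$; it is primitive if its conductor is $(0)$. $K_\tau(a)=\sum_{u\in R^\times}\tau(u)\psi(u+au^{-1})$. Odd characteristic means $R/M$ has odd characteristic; the quadratic character $\sigma:R^\times\to\{\pm1\}$ is $\sigma(u)=$ the quadratic (Legendre) character of the residue class of $u$ in the finite field $R/M$. *)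

theory Defs
  imports Complex_Main
begin

definition units_r :: "'a::comm_ring_1 set" where
  "units_r = {u. u dvd 1}"

definition inv_r :: "'a::comm_ring_1 \<Rightarrow> 'a" where
  "inv_r u = (THE v. u * v = 1)"

definition is_ideal :: "'a::comm_ring_1 set \<Rightarrow> bool" where
  "is_ideal I \<longleftrightarrow> 0 \<in> I \<and> (\<forall>x\<in>I. \<forall>y\<in>I. x + y \<in> I) \<and> (\<forall>r. \<forall>x\<in>I. r * x \<in> I)"

definition maximal_ideal :: "'a::comm_ring_1 set \<Rightarrow> bool" where
  "maximal_ideal M \<longleftrightarrow> is_ideal M \<and> M \<noteq> UNIV \<and>
     (\<forall>J. is_ideal J \<and> M \<subseteq> J \<longrightarrow> J = M \<or> J = UNIV)"

definition local_ring_with :: "'a::comm_ring_1 set \<Rightarrow> bool" where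
  "local_ring_with M \<longleftrightarrow> maximal_ideal M \<and> (\<forall>J. maximal_ideal J \<longrightarrow> J = M)"

definition annihilator :: "'a::comm_ring_1 set \<Rightarrow> 'a set" where
  "annihilator S = {r. \<forall>m\<in>S. r * m = 0}"

definition residue_char :: "'a::comm_ring_1 set \<Rightarrow> nat" where
  "residue_char M = (LEAST n. n > 0 \<and> (of_nat n :: 'a) \<in> M)"

definition additive_character :: "('a::comm_ring_1 \<Rightarrow> complex) \<Rightarrow> bool" where
  "additive_character \<psi> \<longleftrightarrow> (\<forall>x y. \<psi> (x + y) = \<psi> x * \<psi> y) \<and> (\<forall>x. \<psi> x \<noteq> 0)"

definition primitive_additive_character :: "('a::comm_ring_1 \<Rightarrow> complex) \<Rightarrow> bool" where
  "primitive_additive_character \<psi> \<longleftrightarrow> additive_character \<psi> \<and>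
     (\<forall>I. is_ideal I \<and> (\<forall>x\<in>I. \<psi> x = 1) \<longrightarrow> I = {0})"

text \<open>A multiplicative character is a homomorphism R^x -> C^*; only its values on units matter.\<close>
definition mult_character :: "('a::comm_ring_1 \<Rightarrow> complex) \<Rightarrow> bool" where
  "mult_character \<tau> \<longleftrightarrow> (\<forall>u\<in>units_r. \<forall>v\<in>units_r. \<tau> (u * v) = \<tau> u * \<tau> v) \<and>
     (\<forall>u\<in>units_r. \<tau> u \<noteq> 0)"

definition conductor :: "'a::comm_ring_1 set \<Rightarrow> ('a \<Rightarrow> complex) \<Rightarrow> 'a set" where
  "conductor M \<tau> = (if (\<forall>u\<in>units_r. \<tau> u = 1) then UNIV
     else (THE I. is_ideal I \<and> I \<subseteq> M \<and> (\<forall>x\<in>I. \<tau> (1 + x) = 1) \<and>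
            (\<forall>J. is_ideal J \<and> J \<subseteq> M \<and> (\<forall>x\<in>J. \<tau> (1 + x) = 1) \<longrightarrow> J \<subseteq> I)))"

definition primitive_mult_character :: "'a::comm_ring_1 set \<Rightarrow> ('a \<Rightarrow> complex) \<Rightarrow> bool" where
  "primitive_mult_character M \<tau> \<longleftrightarrow> conductor M \<tau> = {0}"

text \<open>Quadratic (Legendre) character of the residue class of u in the field R/M
  (for units u): 1 if u mod M is a square in R/M, -1 otherwise.\<close>
definition quad_char :: "'a::comm_ring_1 set \<Rightarrow> 'a \<Rightarrow> real" where
  "quad_char M u = (if (\<exists>w. u - w * w \<in> M) then 1 else -1)"

definition kloosterman :: "('a::comm_ring_1 \<Rightarrow> complex) \<Rightarrow> ('a \<Rightarrow> complex) \<Rightarrow> 'a \<Rightarrow> complex" where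
  "kloosterman \<psi> \<tau> a = (\<Sum>u\<in>units_r. \<tau> u * \<psi> (u + a * inv_r u))"

end

theory Submission
  imports Defs
begin



lemma inv_r_mult:
  fixes u :: "'a::comm_ring_1"
  assumes "u \<in> units_r" shows "u * inv_r u = 1"
proof -
  from assms obtain k where k: "1 = u * k" unfolding units_r_def by (auto elim: dvdE)
  have "u * (THE v. u * v = 1) = 1"
  proof (rule theI[of "\<lambda>v. u * v = 1" k])
    show "u * k = 1" using k by simp
    fix y assume "u * y = 1"
    then have "k * (u * y) = k" by simp
    then show "y = k" using k by (metis mult.assoc mult.commute mult_1_left)
  qed
  then show ?thesis unfolding inv_r_def .
qed

lemma units_rI: "u * v = (1::'a::comm_ring_1) \<Longrightarrow> u \<in> units_r"
  unfolding units_r_def by (metis dvdI mem_Collect_eq)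

lemma inv_r_unit: "u \<in> units_r \<Longrightarrow> inv_r u \<in> units_r"
  using inv_r_mult[of u] units_rI[of "inv_r u" u] by (simp add: mult.commute)

lemma units_mult: "u \<in> units_r \<Longrightarrow> v \<in> units_r \<Longrightarrow> u * v \<in> units_r"
proof -
  assume "u \<in> units_r" "v \<in> units_r"
  then have "(u * v) * (inv_r u * inv_r v) = 1" using inv_r_mult[of u] inv_r_mult[of v]
    by (simp add: algebra_simps)
  then show ?thesis by (rule units_rI)
qed

lemma one_unit: "1 \<in> units_r" unfolding units_r_def by simp

lemma inv_r_eq: "u \<in> units_r \<Longrightarrow> u * v = 1 \<Longrightarrow> inv_r u = v"
  using inv_r_mult[of u] by (metis mult.assoc mult.commute mult_1_right)




lemma ideal_0: "is_ideal I \<Longrightarrow> 0 \<in> I" unfolding is_ideal_def by auto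
lemma ideal_add: "is_ideal I \<Longrightarrow> x \<in> I \<Longrightarrow> y \<in> I \<Longrightarrow> x + y \<in> I" unfolding is_ideal_def by auto
lemma ideal_mult: "is_ideal I \<Longrightarrow> x \<in> I \<Longrightarrow> r * x \<in> I" unfolding is_ideal_def by auto
lemma ideal_mult2: "is_ideal I \<Longrightarrow> x \<in> I \<Longrightarrow> x * r \<in> I" using ideal_mult[of I x r] by (simp add: mult.commute)
lemma ideal_uminus: "is_ideal I \<Longrightarrow> x \<in> I \<Longrightarrow> - x \<in> I" using ideal_mult[of I x "-1"] by simp
lemma ideal_diff: "is_ideal I \<Longrightarrow> x \<in> I \<Longrightarrow> y \<in> I \<Longrightarrow> x - y \<in> I"
  using ideal_add[of I x "-y"] ideal_uminus[of I y] by simp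
lemma ideal_one: "is_ideal I \<Longrightarrow> 1 \<in> I \<Longrightarrow> I = UNIV"
  using ideal_mult[of I 1] by force

lemma exists_maximal:
  fixes I :: "'a::{comm_ring_1,finite} set"
  assumes "is_ideal I" "I \<noteq> UNIV"
  shows "\<exists>J. maximal_ideal J \<and> I \<subseteq> J"
proof -
  have "\<forall>I::'a set. card (UNIV - I) = n \<longrightarrow> is_ideal I \<longrightarrow> I \<noteq> UNIV \<longrightarrow> (\<exists>J. maximal_ideal J \<and> I \<subseteq> J)" for n
  proof (induction n rule: less_induct)
    case (less n)
    show ?case
    proof (intro allI impI)
      fix I :: "'a set" assume c: "card (UNIV - I) = n" and i: "is_ideal I" and ne: "I \<noteq> UNIV"
      show "\<exists>J. maximal_ideal J \<and> I \<subseteq> J"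
      proof (cases "maximal_ideal I")
        case True then show ?thesis by blast
      next
        case False
        then obtain J where J: "is_ideal J" "I \<subseteq> J" "J \<noteq> I" "J \<noteq> UNIV"
          using i ne unfolding maximal_ideal_def by blast
        have "card (UNIV - J) < card (UNIV - I)"
          using J by (intro psubset_card_mono) auto
        then show ?thesis using less[rule_format, OF _ refl, of J] J c by force
      qed
    qed
  qed
  then show ?thesis using assms by blast
qed

locale KL =
  fixes M :: "'a::{comm_ring_1,finite} set" and \<psi> \<tau> :: "'a \<Rightarrow> complex" and a :: 'a
  assumes loc: "local_ring_with M" and Mne: "M \<noteq> {0}" and oddc: "odd (residue_char M)"
   and prim: "primitive_additive_character \<psi>" and mc: "mult_character \<tau>"
   and np: "\<not> primitive_mult_character M \<tau>" and aU: "a \<in> units_r"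
begin

lemma MI: "is_ideal M" using loc unfolding local_ring_with_def maximal_ideal_def by auto
lemma MU: "M \<noteq> UNIV" using loc unfolding local_ring_with_def maximal_ideal_def by auto
lemma one_notin: "1 \<notin> M" using MU ideal_one MI by blast
lemma M0: "0 \<in> M" using MI ideal_0 by blast
lemma Madd: "x \<in> M \<Longrightarrow> y \<in> M \<Longrightarrow> x + y \<in> M" using MI ideal_add by blast
lemma Mdiff: "x \<in> M \<Longrightarrow> y \<in> M \<Longrightarrow> x - y \<in> M" using MI ideal_diff by blast
lemma Mmult: "x \<in> M \<Longrightarrow> r * x \<in> M" using MI ideal_mult by blast
lemma Mmult2: "x \<in> M \<Longrightarrow> x * r \<in> M" using MI ideal_mult2 by blast
lemma Muminus: "x \<in> M \<Longrightarrow> - x \<in> M" using MI ideal_uminus by blast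

lemma unit_notin: "u \<in> units_r \<Longrightarrow> u \<notin> M"
  using inv_r_mult[of u] Mmult2[of u "inv_r u"] one_notin by auto

lemma one_minus_unit: "m \<in> M \<Longrightarrow> 1 - m \<in> units_r"
proof (rule ccontr)
  assume m: "m \<in> M" and nu: "1 - m \<notin> units_r"
  define I where "I = range (\<lambda>r. r * (1 - m))"
  have I: "is_ideal I" unfolding I_def is_ideal_def
  proof (intro conjI ballI allI)
    show "0 \<in> range (\<lambda>r. r * (1 - m))" by (rule range_eqI[of _ _ 0]) simp
    fix x y assume "x \<in> range (\<lambda>r. r * (1 - m))" "y \<in> range (\<lambda>r. r * (1 - m))"
    then obtain r s where "x = r * (1 - m)" "y = s * (1-m)" by blast
    then show "x + y \<in> range (\<lambda>r. r * (1 - m))" by (intro range_eqI[of _ _ "r+s"]) (simp add: distrib_right)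
  next
    fix t x assume "x \<in> range (\<lambda>r. r * (1 - m))"
    then obtain r where "x = r * (1 - m)" by blast
    then show "t * x \<in> range (\<lambda>r. r * (1 - m))" by (intro range_eqI[of _ _ "t*r"]) (simp add: mult.assoc)
  qed
  have "1 \<notin> I" using nu unfolding I_def by (auto intro: units_rI simp: mult.commute)
  then obtain J where "maximal_ideal J" "I \<subseteq> J" using exists_maximal[OF I] by blast
  then have "I \<subseteq> M" using loc unfolding local_ring_with_def by blast
  then have "1 - m \<in> M" unfolding I_def by (metis mult_1 rangeI subsetD)
  then have "1 \<in> M" using Madd[OF _ m] by fastforce
  then show False using one_notin by blast
qed

lemma notin_unit: "x \<notin> M \<Longrightarrow> x \<in> units_r"
proof -
  assume x: "x \<notin> M"
  define J where "J = {r * x + m | r m. m \<in> M}"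
  have J: "is_ideal J" unfolding J_def is_ideal_def
  proof (intro conjI ballI allI)
    show "0 \<in> {r * x + m |r m. m \<in> M}" using M0 by (intro CollectI exI[of _ 0]) simp
    fix y z assume "y \<in> {r * x + m |r m. m \<in> M}" "z \<in> {r * x + m |r m. m \<in> M}"
    then obtain r1 m1 r2 m2 where "y = r1 * x + m1" "z = r2*x+m2" "m1 \<in> M" "m2 \<in> M" by blast
    then have "y + z = (r1 + r2) * x + (m1 + m2)" "m1 + m2 \<in> M" by (auto simp: algebra_simps Madd)
    then show "y + z \<in> {r * x + m |r m. m \<in> M}" by blast
  next
    fix s y assume "y \<in> {r * x + m |r m. m \<in> M}"
    then obtain r1 m1 where "y = r1 * x + m1" "m1 \<in> M" by blast
    then have "s * y = (s * r1) * x + s * m1" "s * m1 \<in> M" by (auto simp: algebra_simps Mmult Mmult2)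
    then show "s * y \<in> {r * x + m |r m. m \<in> M}" by blast
  qed
  have "M \<subseteq> J" unfolding J_def
  proof
    fix y assume "y \<in> M" then have "y = 0 * x + y \<and> y \<in> M" by simp
    then show "y \<in> {r * x + m |r m. m \<in> M}" by blast
  qed
  moreover have "x \<in> J" unfolding J_def
  proof -
    have "x = 1 * x + 0 \<and> (0::'a) \<in> M" using M0 by simp
    then show "x \<in> {r * x + m |r m. m \<in> M}" by blast
  qed
  ultimately have "J = UNIV" using J x loc unfolding local_ring_with_def maximal_ideal_def by blast
  then obtain r m where rm: "1 = r * x + m" "m \<in> M" unfolding J_def by blast
  then have "r * x = 1 - m" by (simp add: algebra_simps)
  then have "x * (r * inv_r (1 - m)) = 1" using inv_r_mult[OF one_minus_unit[OF rm(2)]]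
    by (metis mult.assoc mult.commute)
  then show ?thesis by (rule units_rI)
qed

lemma unit_iff: "u \<in> units_r \<longleftrightarrow> u \<notin> M" using unit_notin notin_unit by blast

lemma primeM: "x * y \<in> M \<Longrightarrow> x \<in> M \<or> y \<in> M"
proof (rule ccontr)
  assume xy: "x * y \<in> M" and "\<not> (x \<in> M \<or> y \<in> M)"
  then have "x \<in> units_r" "y \<in> units_r" using notin_unit by auto
  then have "x * y \<in> units_r" by (rule units_mult)
  then show False using xy unit_notin by blast
qed

lemma two_notin: "(2::'a) \<notin> M"
proof
  assume t: "(2::'a) \<in> M"
  have ex: "0 < (2::nat) \<and> (of_nat 2::'a) \<in> M" using t by simp
  have le: "residue_char M \<le> 2" unfolding residue_char_def by (rule Least_le) (use ex in auto)
  have pos: "0 < residue_char M \<and> (of_nat (residue_char M)::'a) \<in> M"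
    unfolding residue_char_def by (rule LeastI_ex) (use ex in blast)
  have "residue_char M \<noteq> 1" using pos one_notin by auto
  then have "residue_char M = 2" using le pos by linarith
  then show False using oddc by simp
qed

end



lemma pigeon_nat:
  fixes g :: "nat \<Rightarrow> 'a::finite"
  shows "\<exists>i j. i < j \<and> g i = g j"
proof (rule ccontr)
  assume "\<not> ?thesis"
  then have "inj_on g {..card (UNIV::'a set)}"
    unfolding inj_on_def by (metis linorder_neqE_nat)
  then have "card {..card (UNIV::'a set)} \<le> card (UNIV::'a set)"
    by (rule card_inj_on_le) auto
  then show False by simp
qed

lemma norm_one_from_pow:
  fixes z :: complex
  assumes "z \<noteq> 0" "i < j" "z ^ i = z ^ j"
  shows "norm z = 1"
proof -
  have "z ^ j = z ^ i * z ^ (j - i)" using assms(2) by (simp add: power_add[symmetric])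
  then have "z ^ (j - i) = 1" using assms by simp
  then show ?thesis using power_eq_1_iff assms(2) by fastforce
qed

lemma sum_shift_zero:
  fixes F :: "'b \<Rightarrow> complex"
  assumes "bij_betw g S S" "\<And>x. x \<in> S \<Longrightarrow> F (g x) = k * F x" "k \<noteq> 1"
  shows "sum F S = 0"
proof -
  have "sum F S = sum (\<lambda>x. F (g x)) S" using sum.reindex_bij_betw[OF assms(1), of F] by simp
  also have "\<dots> = k * sum F S" using assms(2) by (simp add: sum_distrib_left)
  finally have "(1 - k) * sum F S = 0" by (simp add: algebra_simps)
  then show ?thesis using assms(3) by simp
qed

lemma bij_transl:
  fixes c :: "'a::ab_group_add"
  assumes "\<And>x. x \<in> S \<Longrightarrow> x + c \<in> S" "\<And>x. x \<in> S \<Longrightarrow> x - c \<in> S"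
  shows "bij_betw (\<lambda>x. x + c) S S"
  by (rule bij_betw_byWitness[of S "\<lambda>x. x - c"]) (use assms in auto)

context KL begin

abbreviation "A \<equiv> annihilator M"

lemma psi_add: "\<psi> (x + y) = \<psi> x * \<psi> y" using prim unfolding primitive_additive_character_def additive_character_def by blast
lemma psi_ne: "\<psi> x \<noteq> 0" using prim unfolding primitive_additive_character_def additive_character_def by blast
lemma psi0: "\<psi> 0 = 1" using psi_add[of 0 0] psi_ne[of 0] by simp
lemma psi_prim: "is_ideal I \<Longrightarrow> I \<noteq> {0} \<Longrightarrow> \<exists>x\<in>I. \<psi> x \<noteq> 1"
  using prim unfolding primitive_additive_character_def by blast

lemma psi_pow: "\<psi> (of_nat n * x) = \<psi> x ^ n"
  by (induction n) (simp_all add: psi0 distrib_right psi_add)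

lemma psi_norm: "norm (\<psi> x) = 1"
proof -
  obtain i j where "i < j" "of_nat i * x = of_nat j * x" using pigeon_nat[of "\<lambda>n. of_nat n * x"] by blast
  then show ?thesis using norm_one_from_pow[OF psi_ne] psi_pow by metis
qed

lemma psi_cnj: "cnj (\<psi> x) = \<psi> (- x)"
proof -
  have "\<psi> x * cnj (\<psi> x) = 1" using complex_norm_square[of "\<psi> x"] psi_norm by simp
  moreover have "\<psi> x * \<psi> (-x) = 1" using psi_add[of x "-x"] psi0 by simp
  ultimately show ?thesis using psi_ne[of x] by (metis mult_left_cancel)
qed

lemma tau_mult: "u \<in> units_r \<Longrightarrow> v \<in> units_r \<Longrightarrow> \<tau> (u * v) = \<tau> u * \<tau> v"
  using mc unfolding mult_character_def by blast
lemma tau_ne: "u \<in> units_r \<Longrightarrow> \<tau> u \<noteq> 0"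
  using mc unfolding mult_character_def by blast
lemma tau1: "\<tau> 1 = 1" using tau_mult[OF one_unit one_unit] tau_ne[OF one_unit] by simp

lemma units_pow: "u \<in> units_r \<Longrightarrow> u ^ n \<in> units_r"
  by (induction n) (simp_all add: one_unit units_mult)

lemma tau_pow: "u \<in> units_r \<Longrightarrow> \<tau> (u ^ n) = \<tau> u ^ n"
  by (induction n) (simp_all add: tau1 tau_mult units_pow)

lemma tau_norm: "u \<in> units_r \<Longrightarrow> norm (\<tau> u) = 1"
proof -
  assume u: "u \<in> units_r"
  obtain i j where "i < j" "u ^ i = u ^ j" using pigeon_nat[of "\<lambda>n. u ^ n"] by blast
  then show ?thesis using norm_one_from_pow[OF tau_ne[OF u]] tau_pow[OF u] by metis
qed

lemma tau_cnj: "u \<in> units_r \<Longrightarrow> cnj (\<tau> u) * \<tau> u = 1"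
  using complex_norm_square[of "\<tau> u"] tau_norm[of u] by (simp add: mult.commute)

lemma sum_psi_ideal: "is_ideal I \<Longrightarrow> I \<noteq> {0} \<Longrightarrow> (\<Sum>x\<in>I. \<psi> x) = 0"
proof -
  assume I: "is_ideal I" "I \<noteq> {0}"
  obtain x0 where x0: "x0 \<in> I" "\<psi> x0 \<noteq> 1" using psi_prim[OF I] by blast
  show ?thesis
  proof (rule sum_shift_zero[where g = "\<lambda>x. x + x0" and k = "\<psi> x0"])
    show "bij_betw (\<lambda>x. x + x0) I I" by (rule bij_transl) (use I(1) x0 in \<open>auto intro: ideal_add ideal_diff\<close>)
  next
    fix x show "\<psi> (x + x0) = \<psi> x0 * \<psi> x" using psi_add[of x x0] by (simp only: mult.commute)
  next
    show "\<psi> x0 \<noteq> 1" using x0(2) .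
  qed
qed

lemma A_ideal: "is_ideal A"
  unfolding is_ideal_def annihilator_def by (auto simp: algebra_simps)

lemma A_mult: "x \<in> A \<Longrightarrow> y \<in> M \<Longrightarrow> x * y = 0" unfolding annihilator_def by auto

lemma A_cong: "x \<in> A \<Longrightarrow> y - z \<in> M \<Longrightarrow> x * y = x * z"
  using A_mult[of x "y - z"] by (simp add: algebra_simps)

lemma one_ne_zero: "(1::'a) \<noteq> 0"
proof
  assume "(1::'a) = 0"
  then have "\<forall>x::'a. x = 0" by (metis mult_1 mult_zero_left)
  then show False using MU M0 by (metis UNIV_eq_I)
qed

lemma A_sub: "A \<subseteq> M"
proof
  fix x assume x: "x \<in> A"
  show "x \<in> M"
  proof (rule ccontr)
    assume "x \<notin> M" then have u: "x \<in> units_r" by (rule notin_unit)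
    obtain m where m: "m \<in> M" "m \<noteq> 0" using Mne M0 by blast
    have "x * m = 0" using A_mult[OF x m(1)] .
    then have "inv_r x * x * m = 0" by (simp add: mult.assoc)
    then show False using inv_r_mult[OF u] m by (simp add: mult.commute)
  qed
qed

lemma plus_unit: "m \<in> M \<Longrightarrow> 1 + m \<in> units_r"
  using one_minus_unit[of "-m"] Muminus by simp

lemma minimal_in_A:
  assumes I: "is_ideal I" "I \<noteq> {0}"
  shows "\<exists>y\<in>I. y \<noteq> 0 \<and> y \<in> A"
proof -
  have "\<forall>x. x \<in> I \<longrightarrow> x \<noteq> 0 \<longrightarrow> card (range (\<lambda>c. c * x)) = n \<longrightarrow> (\<exists>y\<in>I. y \<noteq> 0 \<and> y \<in> A)" for n
  proof (induction n rule: less_induct)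
    case (less n)
    show ?case
    proof (intro allI impI)
      fix x assume x: "x \<in> I" "x \<noteq> 0" and c: "card (range (\<lambda>c. c * x)) = n"
      show "\<exists>y\<in>I. y \<noteq> 0 \<and> y \<in> A"
      proof (cases "x \<in> A")
        case True then show ?thesis using x by blast
      next
        case False
        then obtain m where m: "m \<in> M" "x * m \<noteq> 0" unfolding annihilator_def by (auto simp: mult.commute)
        define y where "y = m * x"
        have yI: "y \<in> I" unfolding y_def using ideal_mult[OF I(1) x(1)] .
        have y0: "y \<noteq> 0" using m unfolding y_def by (simp add: mult.commute)
        have sub: "range (\<lambda>c. c * y) \<subseteq> range (\<lambda>c. c * x)"
          unfolding y_def by (auto simp: mult.assoc[symmetric])
        have "x \<notin> range (\<lambda>c. c * y)"
        proof
          assume "x \<in> range (\<lambda>c. c * y)"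
          then obtain c where "x = c * (m * x)" unfolding y_def by blast
          then have "(1 - c * m) * x = 0" by (simp add: algebra_simps)
          moreover have "1 - c * m \<in> units_r" using one_minus_unit Mmult[OF m(1)] by blast
          ultimately have "inv_r (1 - c * m) * (1 - c * m) * x = 0" by (simp add: mult.assoc)
          then show False using inv_r_mult[OF \<open>1 - c * m \<in> units_r\<close>] x(2) by (simp add: mult.commute)
        qed
        moreover have "x \<in> range (\<lambda>c. c * x)" by (rule range_eqI[of _ _ 1]) simp
        ultimately have "range (\<lambda>c. c * y) \<subset> range (\<lambda>c. c * x)" using sub by blast
        moreover have "finite (range (\<lambda>c. c * x))" by simp
        ultimately have "card (range (\<lambda>c. c * y)) < n" using c psubset_card_mono by metis
        then show ?thesis using less yI y0 by blast
      qed
    qed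
  qed
  moreover obtain x where "x \<in> I" "x \<noteq> 0" using I ideal_0 by blast
  ultimately show ?thesis by blast
qed

lemma A_ne: "A \<noteq> {0}"
proof -
  have "is_ideal (UNIV::'a set)" unfolding is_ideal_def by simp
  moreover have "(UNIV::'a set) \<noteq> {0}" using one_ne_zero by blast
  ultimately show ?thesis using minimal_in_A[of UNIV] by blast
qed

end



lemma principal_ideal: "is_ideal (range (\<lambda>c. c * (y::'a::comm_ring_1)))"
  unfolding is_ideal_def
proof (intro conjI ballI allI)
  show "0 \<in> range (\<lambda>c. c * y)" by (rule range_eqI[of _ _ 0]) simp
  fix x z assume "x \<in> range (\<lambda>c. c * y)" "z \<in> range (\<lambda>c. c * y)"
  then obtain r s where "x = r * y" "z = s * y" by blast
  then show "x + z \<in> range (\<lambda>c. c * y)" by (intro range_eqI[of _ _ "r+s"]) (simp add: distrib_right)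
next
  fix t x assume "x \<in> range (\<lambda>c. c * y)"
  then obtain r where "x = r * y" by blast
  then show "t * x \<in> range (\<lambda>c. c * y)" by (intro range_eqI[of _ _ "t*r"]) (simp add: mult.assoc)
qed

context KL begin

lemma sum_psi_mult: "(\<Sum>c\<in>UNIV. \<psi> (c * y)) = (if y = 0 then of_nat (card (UNIV::'a set)) else 0)"
proof (cases "y = 0")
  case True then show ?thesis by (simp add: psi0)
next
  case False
  have "range (\<lambda>c. c * y) \<noteq> {0}" using False by (metis mult_1 rangeI singletonD)
  then obtain z where z: "z \<in> range (\<lambda>c. c * y)" "\<psi> z \<noteq> 1" using psi_prim[OF principal_ideal] by blast
  then obtain c0 where c0: "z = c0 * y" by blast
  have "(\<Sum>c\<in>UNIV. \<psi> (c * y)) = 0"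
  proof (rule sum_shift_zero[where g = "\<lambda>c. c + c0" and k = "\<psi> z"])
    show "bij_betw (\<lambda>c. c + c0) UNIV UNIV" by (rule bij_transl) auto
  next
    fix c have "(c + c0) * y = z + c * y" using c0 by (simp add: distrib_right add.commute)
    then show "\<psi> ((c + c0) * y) = \<psi> z * \<psi> (c * y)"
      using psi_add[of z "c*y"] by simp
  next
    show "\<psi> z \<noteq> 1" using z(2) .
  qed
  then show ?thesis using False by simp
qed

lemma sum_psi_B:
  assumes B: "is_ideal B" "B \<subseteq> A" "B \<noteq> {0}"
  shows "(\<Sum>y\<in>B. \<psi> (c * y)) = (if c \<in> M then of_nat (card B) else 0)"
proof (cases "c \<in> M")
  case True
  then have "\<And>y. y \<in> B \<Longrightarrow> c * y = 0" using A_mult B(2) by (metis mult.commute subsetD)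
  then show ?thesis using True by (simp add: psi0)
next
  case False
  then have u: "c \<in> units_r" by (rule notin_unit)
  obtain z where z: "z \<in> B" "\<psi> z \<noteq> 1" using psi_prim[OF B(1) B(3)] by blast
  define y0 where "y0 = inv_r c * z"
  have y0: "y0 \<in> B" unfolding y0_def using ideal_mult[OF B(1) z(1)] .
  have cy0: "c * y0 = z" unfolding y0_def using inv_r_mult[OF u] by (simp add: mult.assoc[symmetric])
  have "(\<Sum>y\<in>B. \<psi> (c * y)) = 0"
  proof (rule sum_shift_zero[where g = "\<lambda>y. y + y0" and k = "\<psi> z"])
    show "bij_betw (\<lambda>y. y + y0) B B" by (rule bij_transl) (use B(1) y0 in \<open>auto intro: ideal_add ideal_diff\<close>)
  next
    fix y have "c * (y + y0) = c * y + z" using cy0 by (simp add: distrib_left)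
    then show "\<psi> (c * (y + y0)) = \<psi> z * \<psi> (c * y)"
      using psi_add[of "c*y" z] by (simp only: mult.commute)
  next
    show "\<psi> z \<noteq> 1" using z(2) .
  qed
  then show ?thesis using False by simp
qed

lemma count_B:
  assumes B: "is_ideal B" "B \<subseteq> A" "B \<noteq> {0}"
  shows "card B * card M = card (UNIV::'a set)"
proof -
  have "(\<Sum>c\<in>UNIV. \<Sum>y\<in>B. \<psi> (c * y)) = (\<Sum>y\<in>B. \<Sum>c\<in>UNIV. \<psi> (c * y))" by (rule sum.swap)
  also have "\<dots> = (\<Sum>y\<in>B. if y = 0 then of_nat (card (UNIV::'a set)) else 0)" by (simp add: sum_psi_mult)
  also have "\<dots> = of_nat (card (UNIV::'a set))" using ideal_0[OF B(1)] by (simp add: sum.delta)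
  finally have 1: "(\<Sum>c\<in>UNIV. \<Sum>y\<in>B. \<psi> (c * y)) = of_nat (card (UNIV::'a set))" .
  have "(\<Sum>c\<in>UNIV. \<Sum>y\<in>B. \<psi> (c * y)) = (\<Sum>c\<in>UNIV. if c \<in> M then of_nat (card B) else 0)"
    using sum_psi_B[OF B] by simp
  also have "\<dots> = (\<Sum>c\<in>UNIV \<inter> M. of_nat (card B))" by (rule sum.inter_restrict[symmetric]) simp
  also have "\<dots> = of_nat (card M * card B)" by simp
  finally have "(of_nat (card M * card B)::complex) = of_nat (card (UNIV::'a set))" using 1 by simp
  then have "card M * card B = card (UNIV::'a set)" by (simp only: of_nat_eq_iff)
  then show ?thesis by (simp add: mult.commute)
qed

lemma card_A: "card A * card M = card (UNIV::'a set)"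
  using count_B[OF A_ideal _ A_ne] by simp

definition I0 where "I0 = {x\<in>M. \<forall>r. \<tau> (1 + r * x) = 1}"

lemma I0_ideal: "is_ideal I0"
  unfolding is_ideal_def
proof (intro conjI ballI allI)
  show "0 \<in> I0" unfolding I0_def using M0 tau1 by simp
  fix x y assume x: "x \<in> I0" and y: "y \<in> I0"
  show "x + y \<in> I0" unfolding I0_def
  proof (intro CollectI conjI allI)
    show "x + y \<in> M" using x y Madd unfolding I0_def by blast
    fix r
    define e where "e = 1 + r * x"
    have eu: "e \<in> units_r" unfolding e_def using plus_unit Mmult x unfolding I0_def by blast
    have te: "\<tau> e = 1" using x unfolding I0_def e_def by blast
    have ym: "inv_r e * r * y \<in> M" using y Mmult unfolding I0_def by blast
    have "1 + r * (x + y) = e * (1 + (inv_r e * r) * y)"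
      using inv_r_mult[OF eu] unfolding e_def by (simp add: algebra_simps)
    then have "\<tau> (1 + r * (x + y)) = \<tau> e * \<tau> (1 + (inv_r e * r) * y)"
      using tau_mult[OF eu plus_unit[OF ym]] by (simp add: mult.assoc)
    then show "\<tau> (1 + r * (x + y)) = 1" using te y unfolding I0_def by simp
  qed
next
  fix s x assume x: "x \<in> I0"
  then show "s * x \<in> I0" unfolding I0_def using Mmult by (auto simp: mult.assoc[symmetric])
qed

lemma tauA: "x \<in> A \<Longrightarrow> \<tau> (1 + x) = 1"
proof (cases "\<forall>u\<in>units_r. \<tau> u = 1")
  case True
  assume "x \<in> A" then have "1 + x \<in> units_r" using plus_unit A_sub by blast
  then show ?thesis using True by blast
next
  case False
  assume xA: "x \<in> A"
  let ?P = "\<lambda>I. is_ideal I \<and> I \<subseteq> M \<and> (\<forall>x\<in>I. \<tau> (1 + x) = 1) \<and>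
            (\<forall>J. is_ideal J \<and> J \<subseteq> M \<and> (\<forall>x\<in>J. \<tau> (1 + x) = 1) \<longrightarrow> J \<subseteq> I)"
  have I0i: "is_ideal I0" by (rule I0_ideal)
  have I0M: "I0 \<subseteq> M" unfolding I0_def by blast
  have I0t: "\<forall>x\<in>I0. \<tau> (1 + x) = 1"
  proof
    fix x assume "x \<in> I0" then have "\<tau> (1 + 1 * x) = 1" unfolding I0_def by blast
    then show "\<tau> (1 + x) = 1" by simp
  qed
  have I0max: "\<forall>J. is_ideal J \<and> J \<subseteq> M \<and> (\<forall>x\<in>J. \<tau> (1 + x) = 1) \<longrightarrow> J \<subseteq> I0"
  proof (intro allI impI subsetI)
    fix J x assume J: "is_ideal J \<and> J \<subseteq> M \<and> (\<forall>x\<in>J. \<tau> (1 + x) = 1)" and x: "x \<in> J"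
    have "x \<in> M" using J x by blast
    moreover have "\<forall>r. \<tau> (1 + r * x) = 1"
    proof
      fix r have "r * x \<in> J" using ideal_mult J x by blast
      then show "\<tau> (1 + r * x) = 1" using J by blast
    qed
    ultimately show "x \<in> I0" unfolding I0_def by blast
  qed
  have PI0: "?P I0" using I0i I0M I0t I0max by (intro conjI)
  have "conductor M \<tau> = (THE I. ?P I)" unfolding conductor_def by (rule if_not_P[OF False])
  also have "\<dots> = I0"
  proof (rule the_equality)
    show "?P I0" by (rule PI0)
    fix I assume P: "?P I"
    have Imax: "\<forall>J. is_ideal J \<and> J \<subseteq> M \<and> (\<forall>x\<in>J. \<tau> (1 + x) = 1) \<longrightarrow> J \<subseteq> I"
      using P by (elim conjE) assumption
    have Ic: "is_ideal I \<and> I \<subseteq> M \<and> (\<forall>x\<in>I. \<tau> (1 + x) = 1)"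
      using P by (elim conjE) (intro conjI)
    have "I0 \<subseteq> I" using Imax I0i I0M I0t by blast
    moreover have "I \<subseteq> I0" using I0max Ic by blast
    ultimately show "I = I0" by (rule antisym[rotated])
  qed
  finally have "I0 \<noteq> {0}" using np unfolding primitive_mult_character_def by simp
  then obtain y where y: "y \<in> I0" "y \<noteq> 0" "y \<in> A" using minimal_in_A[OF I0_ideal] by blast
  define B where "B = I0 \<inter> A"
  have Bi: "is_ideal B" unfolding is_ideal_def
  proof (intro conjI ballI allI)
    show "0 \<in> B" unfolding B_def using ideal_0[OF I0_ideal] ideal_0[OF A_ideal] by (rule IntI)
    fix x z assume "x \<in> B" "z \<in> B"
    then show "x + z \<in> B" unfolding B_def using ideal_add[OF I0_ideal] ideal_add[OF A_ideal] by (meson IntD1 IntD2 IntI)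
  next
    fix r x assume "x \<in> B"
    then show "r * x \<in> B" unfolding B_def using ideal_mult[OF I0_ideal] ideal_mult[OF A_ideal] by (meson IntD1 IntD2 IntI)
  qed
  have Bne: "B \<noteq> {0}" unfolding B_def using y by blast
  have BA: "B \<subseteq> A" unfolding B_def by (rule Int_lower2)
  have "card B * card M = card A * card M" using count_B[OF Bi BA Bne] card_A by (simp only:)
  moreover have "M \<noteq> {}" using M0 by blast
  then have "card M > 0" by (simp add: card_gt_0_iff)
  ultimately have "card B = card A" by (metis mult_right_cancel not_gr0)
  then have "B = A" by (intro card_subset_eq) (auto simp: B_def)
  then have "x \<in> I0" using xA unfolding B_def by blast
  then show ?thesis unfolding I0_def by (metis (mono_tags, lifting) mem_Collect_eq mult_1)
qed

lemma tauA': "x \<in> A \<Longrightarrow> \<tau> (1 + r * x) = 1"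
  using tauA ideal_mult[OF A_ideal] by blast

end



context KL begin

definition f where "f u = u + a * inv_r u"
definition V where "V = {v. v * v - a \<in> M}"
definition D where "D v = {u. u - v \<in> M}"

lemma times_unit_M: "x * w \<in> M \<Longrightarrow> w \<in> units_r \<Longrightarrow> x \<in> M"
  using primeM unit_notin by blast

lemma V_unit: "v \<in> V \<Longrightarrow> v \<in> units_r"
proof (rule notin_unit, rule notI)
  assume "v \<in> V" "v \<in> M"
  then have "v * v \<in> M" "v * v - a \<in> M" using Mmult unfolding V_def by auto
  then have "v * v - (v * v - a) \<in> M" by (rule Mdiff)
  then show False using aU unit_notin by simp
qed

lemma D_unit: "v \<in> units_r \<Longrightarrow> u \<in> D v \<Longrightarrow> u \<in> units_r"
proof (rule notin_unit, rule notI)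
  assume "v \<in> units_r" "u \<in> D v" "u \<in> M"
  then have "u - (u - v) \<in> M" using Mdiff unfolding D_def by blast
  then show False using \<open>v \<in> units_r\<close> unit_notin by simp
qed

lemma Z_zero:
  assumes v: "v \<in> units_r" "v \<notin> V"
  shows "(\<Sum>u\<in>D v. \<tau> u * \<psi> (f u)) = 0"
proof -
  define iv where "iv = inv_r v"
  have viv: "v * iv = 1" unfolding iv_def using inv_r_mult[OF v(1)] .
  define c where "c = 1 - a * iv * iv"
  have "c * (v * v) = v * v - a * (v * iv) * (v * iv)" unfolding c_def by (simp add: algebra_simps)
  then have cvv: "c * (v * v) = v * v - a" using viv by simp
  have cM: "c \<notin> M" using v(2) cvv Mmult2[of c "v*v"] unfolding V_def by auto
  then have cu: "c \<in> units_r" by (rule notin_unit)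
  obtain z where z: "z \<in> A" "\<psi> z \<noteq> 1" using psi_prim[OF A_ideal A_ne] by blast
  define x0 where "x0 = inv_r c * z"
  have x0A: "x0 \<in> A" unfolding x0_def using ideal_mult[OF A_ideal z(1)] .
  have x0M: "x0 \<in> M" using x0A A_sub by blast
  have "x0 * c = (c * inv_r c) * z" unfolding x0_def by (simp add: algebra_simps)
  then have x0c: "x0 * c = z" using inv_r_mult[OF cu] by simp
  show ?thesis
  proof (rule sum_shift_zero[where g = "\<lambda>u. u + x0" and k = "\<psi> z"])
    show "bij_betw (\<lambda>u. u + x0) (D v) (D v)"
    proof (rule bij_transl)
      fix u assume "u \<in> D v"
      then have "u - v \<in> M" unfolding D_def by blast
      moreover have e: "u + x0 - v = (u - v) + x0" "u - x0 - v = (u - v) - x0" by (simp_all add: algebra_simps)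
      ultimately show "u + x0 \<in> D v" "u - x0 \<in> D v" unfolding D_def mem_Collect_eq e
        using Madd[OF _ x0M] Mdiff[OF _ x0M] by auto
    qed
  next
    show "\<psi> z \<noteq> 1" by (rule z(2))
  next
    fix u assume uD: "u \<in> D v"
    have uu: "u \<in> units_r" using D_unit[OF v(1) uD] .
    define iu where "iu = inv_r u"
    have uiu: "u * iu = 1" unfolding iu_def using inv_r_mult[OF uu] .
    have e: "u + x0 - v = (u - v) + x0" by (simp add: algebra_simps)
    have wD: "u + x0 \<in> D v" using uD Madd[OF _ x0M] unfolding D_def mem_Collect_eq e by blast
    have wu: "u + x0 \<in> units_r" using D_unit[OF v(1) wD] .
    define iw where "iw = inv_r (u + x0)"
    have wiw: "(u + x0) * iw = 1" unfolding iw_def using inv_r_mult[OF wu] .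
    have t1: "\<tau> (u + x0) = \<tau> u"
    proof -
      have "u * (1 + iu * x0) = u + (u * iu) * x0" by (simp add: algebra_simps)
      then have "u + x0 = u * (1 + iu * x0)" using uiu by simp
      moreover have "1 + iu * x0 \<in> units_r" using plus_unit Mmult[OF x0M] by blast
      ultimately have "\<tau> (u + x0) = \<tau> u * \<tau> (1 + iu * x0)" using tau_mult[OF uu] by simp
      then show ?thesis using tauA'[OF x0A] by simp
    qed
    have "a*iu*iw*(u - (u + x0)) = a*iw*(u*iu) - a*iu*((u + x0)*iw)" by (simp add: algebra_simps)
    then have h1: "a*iu*iw*(u - (u + x0)) = a*iw - a*iu" using uiu wiw by simp
    have h2: "a*iu*iw*(u - (u + x0)) = - (x0*(a*iu*iw))" by (simp add: algebra_simps)
    have h: "a*iw - a*iu + x0*(a*iu*iw) = 0" using h1 h2 by simp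
    have f1: "f (u + x0) = u + x0 + a*iw" unfolding f_def iw_def by simp
    have f2: "f u = u + a*iu" unfolding f_def iu_def by simp
    have "(u + x0 + a*iw) - (u + a*iu + x0 * (1 - a * iu * iw)) = a*iw - a*iu + x0*(a*iu*iw)"
      by (simp add: algebra_simps)
    then have "(u + x0 + a*iw) - (u + a*iu + x0 * (1 - a * iu * iw)) = 0" by (simp only: h)
    then have fe: "f (u + x0) = f u + x0 * (1 - a * iu * iw)" unfolding f1 f2 by (simp only: right_minus_eq)
    have "(a * iv * iv * iu * iw) * ((u - v) * (u + v) + u * x0) = a*iv*iv*(u*iu)*((u + x0)*iw) - a*iu*iw*(v*iv)*(v*iv)"
      by (simp add: algebra_simps)
    then have diff: "(1 - a * iu * iw) - c = (a * iv * iv * iu * iw) * ((u - v) * (u + v) + u * x0)"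
      unfolding c_def using uiu wiw viv by simp
    have "(u - v) * (u + v) + u * x0 \<in> M"
    proof -
      have "u - v \<in> M" using uD unfolding D_def by blast
      then show ?thesis using Madd[OF Mmult2[of "u - v" "u + v"] Mmult[OF x0M, of u]] by blast
    qed
    then have "(1 - a * iu * iw) - c \<in> M" unfolding diff by (rule Mmult)
    then have "x0 * (1 - a * iu * iw) = x0 * c" by (rule A_cong[OF x0A])
    then have "f (u + x0) = f u + z" using fe x0c by simp
    then show "\<tau> (u + x0) * \<psi> (f (u + x0)) = \<psi> z * (\<tau> u * \<psi> (f u))"
      using t1 psi_add by (simp add: algebra_simps)
  qed
qed

end



context KL begin

lemma phi_form:
  assumes v: "v \<in> units_r" and m: "m \<in> M"
  shows "f (v * (1 + m)) - f v = m * v - a * m * inv_r v * inv_r (1 + m)"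
proof -
  define iv where "iv = inv_r v"
  define ir where "ir = inv_r (1 + m)"
  have ru: "1 + m \<in> units_r" using plus_unit[OF m] .
  have viv: "v * iv = 1" unfolding iv_def using inv_r_mult[OF v] .
  have rir: "(1 + m) * ir = 1" unfolding ir_def using inv_r_mult[OF ru] .
  have "(v * (1 + m)) * (iv * ir) = (v * iv) * ((1 + m) * ir)" by (simp add: algebra_simps)
  then have "inv_r (v * (1 + m)) = iv * ir" using viv rir by (intro inv_r_eq units_mult v ru) simp
  then have "f (v * (1 + m)) - f v = v * (1 + m) + a * (iv * ir) - (v + a * iv)"
    unfolding f_def iv_def by simp
  also have "\<dots> = m * v - a * m * iv * ir + a * iv * ((1 + m) * ir - 1)" by (simp add: algebra_simps)
  also have "\<dots> = m * v - a * m * iv * ir" using rir by simp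
  finally show ?thesis unfolding iv_def ir_def .
qed

lemma Va:
  assumes m: "m \<in> A" and v: "v \<in> V"
  shows "f (v * (1 + m)) - f v = 0"
proof -
  have vu: "v \<in> units_r" using V_unit[OF v] .
  have mM: "m \<in> M" using m A_sub by blast
  define iv where "iv = inv_r v"
  define ir where "ir = inv_r (1 + m)"
  have ru: "1 + m \<in> units_r" using plus_unit[OF mM] .
  have viv: "v * iv = 1" unfolding iv_def using inv_r_mult[OF vu] .
  have rir: "(1 + m) * ir = 1" unfolding ir_def using inv_r_mult[OF ru] .
  have "(v - a * iv * ir) * (v * (1 + m)) = (v * v - a) + (v * v) * m + a - a * (v * iv) * ((1 + m) * ir)"
    by (simp add: algebra_simps)
  also have "\<dots> = (v * v - a) + (v * v) * m" using viv rir by simp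
  finally have "(v - a * iv * ir) * (v * (1 + m)) \<in> M"
    using v mM unfolding V_def by (auto intro: Madd Mmult)
  then have "v - a * iv * ir \<in> M" using times_unit_M units_mult[OF vu ru] by blast
  then have "m * (v - a * iv * ir) = 0" using A_mult[OF m] by blast
  then show ?thesis using phi_form[OF vu mM] unfolding iv_def ir_def by (simp add: algebra_simps)
qed

lemma Zval:
  assumes v: "v \<in> V"
  shows "cnj (\<tau> v) * \<psi> (- f v) * (\<Sum>u\<in>D v. \<tau> u * \<psi> (f u))
       = (\<Sum>m\<in>M. \<tau> (1 + m) * \<psi> (f (v * (1 + m)) - f v))"
proof -
  have vu: "v \<in> units_r" using V_unit[OF v] .
  define iv where "iv = inv_r v"
  have viv: "v * iv = 1" unfolding iv_def using inv_r_mult[OF vu] .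
  have bij: "bij_betw (\<lambda>m. v * (1 + m)) M (D v)"
  proof (rule bij_betw_byWitness[where f' = "\<lambda>u. iv * u - 1"])
    show "\<forall>m\<in>M. iv * (v * (1 + m)) - 1 = m"
    proof
      fix m have "iv * (v * (1 + m)) - 1 = (v * iv) * (1 + m) - 1" by (simp add: algebra_simps)
      then show "iv * (v * (1 + m)) - 1 = m" using viv by simp
    qed
    show "\<forall>u\<in>D v. v * (1 + (iv * u - 1)) = u"
    proof
      fix u have "v * (1 + (iv * u - 1)) = (v * iv) * u" by (simp add: algebra_simps)
      then show "v * (1 + (iv * u - 1)) = u" using viv by simp
    qed
    show "(\<lambda>m. v * (1 + m)) ` M \<subseteq> D v"
    proof
      fix x assume "x \<in> (\<lambda>m. v * (1 + m)) ` M"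
      then obtain m where m: "m \<in> M" "x = v * (1 + m)" by blast
      have "x - v = v * m" using m(2) by (simp add: algebra_simps)
      then show "x \<in> D v" unfolding D_def using Mmult[OF m(1)] by simp
    qed
    show "(\<lambda>u. iv * u - 1) ` D v \<subseteq> M"
    proof
      fix x assume "x \<in> (\<lambda>u. iv * u - 1) ` D v"
      then obtain u where u: "u \<in> D v" "x = iv * u - 1" by blast
      have "iv * (u - v) = iv * u - v * iv" by (simp add: algebra_simps)
      then have "x = iv * (u - v)" using u(2) viv by simp
      then show "x \<in> M" using u(1) Mmult unfolding D_def by blast
    qed
  qed
  have "(\<Sum>u\<in>D v. \<tau> u * \<psi> (f u)) = (\<Sum>m\<in>M. \<tau> (v * (1 + m)) * \<psi> (f (v * (1 + m))))"
    using sum.reindex_bij_betw[OF bij, of "\<lambda>u. \<tau> u * \<psi> (f u)"] by simp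
  then have "cnj (\<tau> v) * \<psi> (- f v) * (\<Sum>u\<in>D v. \<tau> u * \<psi> (f u))
     = (\<Sum>m\<in>M. cnj (\<tau> v) * \<psi> (- f v) * (\<tau> (v * (1 + m)) * \<psi> (f (v * (1 + m)))))"
    by (simp add: sum_distrib_left)
  also have "\<dots> = (\<Sum>m\<in>M. \<tau> (1 + m) * \<psi> (f (v * (1 + m)) - f v))"
  proof (rule sum.cong[OF refl])
    fix m assume m: "m \<in> M"
    have "\<tau> (v * (1 + m)) = \<tau> v * \<tau> (1 + m)" using tau_mult[OF vu plus_unit[OF m]] .
    moreover have "\<psi> (f (v * (1 + m)) - f v) = \<psi> (- f v) * \<psi> (f (v * (1 + m)))"
      using psi_add[of "- f v" "f (v * (1 + m))"] by simp
    moreover have "cnj (\<tau> v) * \<tau> v = 1" using tau_cnj[OF vu] .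
    ultimately show "cnj (\<tau> v) * \<psi> (- f v) * (\<tau> (v * (1 + m)) * \<psi> (f (v * (1 + m))))
        = \<tau> (1 + m) * \<psi> (f (v * (1 + m)) - f v)"
      by (simp add: algebra_simps)
  qed
  finally show ?thesis .
qed

end



context KL begin

lemma two_unit: "(2::'a) \<in> units_r" using notin_unit two_notin by blast

lemma Vz:
  assumes m: "m \<in> M" "m \<notin> A"
  shows "(\<Sum>v\<in>V. \<psi> (f (v * (1 + m)) - f v)) = 0"
proof -
  obtain x1 where x1: "x1 \<in> M" "m * x1 \<noteq> 0" using m(2) unfolding annihilator_def by auto
  define I where "I = (\<lambda>h. m * h) ` M"
  have Ii: "is_ideal I" unfolding I_def is_ideal_def
  proof (intro conjI ballI allI)
    show "0 \<in> (\<lambda>h. m * h) ` M" using M0 by (intro image_eqI[of _ _ 0]) simp_all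
    fix x y assume "x \<in> (\<lambda>h. m * h) ` M" "y \<in> (\<lambda>h. m * h) ` M"
    then obtain h1 h2 where "x = m * h1" "y = m * h2" "h1 \<in> M" "h2 \<in> M" by blast
    then show "x + y \<in> (\<lambda>h. m * h) ` M" by (intro image_eqI[of _ _ "h1 + h2"]) (simp_all add: distrib_left Madd)
  next
    fix s x assume "x \<in> (\<lambda>h. m * h) ` M"
    then obtain h1 where "x = m * h1" "h1 \<in> M" by blast
    then show "s * x \<in> (\<lambda>h. m * h) ` M" by (intro image_eqI[of _ _ "s * h1"]) (simp_all add: algebra_simps Mmult Mmult2)
  qed
  have Ine: "I \<noteq> {0}" using x1 unfolding I_def by blast
  obtain z0 where z0: "z0 \<in> I" "z0 \<noteq> 0" "z0 \<in> A" using minimal_in_A[OF Ii Ine] by blast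
  obtain h0 where h0: "h0 \<in> M" "z0 = m * h0" using z0(1) unfolding I_def by blast
  have "range (\<lambda>c. c * z0) \<noteq> {0}" using z0(2) by (metis mult_1 rangeI singletonD)
  then obtain c1 where c1: "\<psi> (c1 * z0) \<noteq> 1" using psi_prim[OF principal_ideal] by blast
  define i2 where "i2 = inv_r (2::'a)"
  have t2: "2 * i2 = 1" unfolding i2_def using inv_r_mult[OF two_unit] .
  define h where "h = c1 * h0 * i2"
  have hM: "h \<in> M" unfolding h_def using Mmult Mmult2 h0(1) by blast
  define p where "p = m * h"
  have p_eq: "p = (c1 * i2) * z0" unfolding p_def h_def h0(2) by (simp add: algebra_simps)
  have pA: "p \<in> A" unfolding p_eq using ideal_mult[OF A_ideal z0(3)] .
  have "p * 2 = (c1 * z0) * (2 * i2)" unfolding p_eq by (simp add: algebra_simps)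
  then have p2: "p * 2 = c1 * z0" using t2 by simp
  show ?thesis
  proof (rule sum_shift_zero[where g = "\<lambda>v. v + h" and k = "\<psi> (c1 * z0)"])
    show "bij_betw (\<lambda>v. v + h) V V"
    proof (rule bij_transl)
      fix v assume "v \<in> V"
      then have vv: "v * v - a \<in> M" unfolding V_def by blast
      have e: "(v + h) * (v + h) - a = (v * v - a) + h * (v + v + h)"
           "(v - h) * (v - h) - a = (v * v - a) + h * (h - v - v)" by (simp_all add: algebra_simps)
      show "v + h \<in> V" "v - h \<in> V" unfolding V_def mem_Collect_eq e
        using Madd[OF vv Mmult2[OF hM]] by blast+
    qed
  next
    show "\<psi> (c1 * z0) \<noteq> 1" by (rule c1)
  next
    fix v assume v: "v \<in> V"
    have vu: "v \<in> units_r" using V_unit[OF v] .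
    have wV: "v + h \<in> V"
    proof -
      have vv: "v * v - a \<in> M" using v unfolding V_def by blast
      have e: "(v + h) * (v + h) - a = (v * v - a) + h * (v + v + h)" by (simp add: algebra_simps)
      show ?thesis unfolding V_def mem_Collect_eq e using Madd[OF vv Mmult2[OF hM]] by blast
    qed
    have wu: "v + h \<in> units_r" using V_unit[OF wV] .
    have ru: "1 + m \<in> units_r" using plus_unit[OF m(1)] .
    define iv where "iv = inv_r v"
    define iw where "iw = inv_r (v + h)"
    define ir where "ir = inv_r (1 + m)"
    have viv: "v * iv = 1" unfolding iv_def using inv_r_mult[OF vu] .
    have wiw: "(v + h) * iw = 1" unfolding iw_def using inv_r_mult[OF wu] .
    have rir: "(1 + m) * ir = 1" unfolding ir_def using inv_r_mult[OF ru] .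
    have "m * (v + h) - a * m * iw * ir - (m * v - a * m * iv * ir)
        = p * (1 + a * ir * iw * iv) - a * m * ir * (iw * (1 - v * iv) - iv * (1 - (v + h) * iw))"
      unfolding p_def by (simp add: algebra_simps)
    also have "\<dots> = p * (1 + a * ir * iw * iv)" using viv wiw by simp
    finally have d1: "(f ((v + h) * (1 + m)) - f (v + h)) - (f (v * (1 + m)) - f v) = p * (1 + a * ir * iw * iv)"
      using phi_form[OF vu m(1)] phi_form[OF wu m(1)] unfolding iv_def iw_def ir_def by simp
    have "(ir * iw * iv) * ((a - v * v) - h * v - m * ((v + h) * v))
        = a * ir * iw * iv - ((1 + m) * ir) * ((v + h) * iw) * (v * iv)"
      by (simp add: algebra_simps)
    also have "\<dots> = (1 + a * ir * iw * iv) - 2" using viv wiw rir by simp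
    finally have "(1 + a * ir * iw * iv) - 2 \<in> M"
      using v m(1) hM unfolding V_def by (metis (no_types, lifting) Mdiff Mmult Mmult2 Muminus mem_Collect_eq minus_diff_eq)
    then have "p * (1 + a * ir * iw * iv) = p * 2" by (rule A_cong[OF pA])
    then have "f ((v + h) * (1 + m)) - f (v + h) = (f (v * (1 + m)) - f v) + c1 * z0"
      using d1 p2 by (simp add: algebra_simps)
    then show "\<psi> (f ((v + h) * (1 + m)) - f (v + h)) = \<psi> (c1 * z0) * \<psi> (f (v * (1 + m)) - f v)"
      using psi_add by (simp add: mult.commute)
  qed
qed

end



context KL begin

definition T where "T = (\<Sum>u\<in>units_r. \<Sum>v\<in>units_r.
   (if u - v \<in> M then \<tau> u * cnj (\<tau> v) * \<psi> (f u - f v) else 0))"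

lemma V_sub: "V \<subseteq> units_r" using V_unit by blast

lemma T_val: "T = of_nat (card A * card V)"
proof -
  have "T = (\<Sum>v\<in>units_r. \<Sum>u\<in>units_r. (if u - v \<in> M then \<tau> u * cnj (\<tau> v) * \<psi> (f u - f v) else 0))"
    unfolding T_def by (rule sum.swap)
  also have "\<dots> = (\<Sum>v\<in>units_r. cnj (\<tau> v) * \<psi> (- f v) * (\<Sum>u\<in>D v. \<tau> u * \<psi> (f u)))"
  proof (rule sum.cong[OF refl])
    fix v :: 'a assume vu: "v \<in> units_r"
    have "(\<Sum>u\<in>units_r. (if u - v \<in> M then \<tau> u * cnj (\<tau> v) * \<psi> (f u - f v) else 0))
        = (\<Sum>u\<in>units_r \<inter> D v. \<tau> u * cnj (\<tau> v) * \<psi> (f u - f v))"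
      unfolding D_def by (simp add: sum.inter_restrict)
    also have "units_r \<inter> D v = D v" using D_unit[OF vu] by blast
    also have "(\<Sum>u\<in>D v. \<tau> u * cnj (\<tau> v) * \<psi> (f u - f v)) = (\<Sum>u\<in>D v. cnj (\<tau> v) * \<psi> (- f v) * (\<tau> u * \<psi> (f u)))"
    proof (rule sum.cong[OF refl])
      fix u show "\<tau> u * cnj (\<tau> v) * \<psi> (f u - f v) = cnj (\<tau> v) * \<psi> (- f v) * (\<tau> u * \<psi> (f u))"
        using psi_add[of "- f v" "f u"] by (simp add: algebra_simps)
    qed
    finally show "(\<Sum>u\<in>units_r. (if u - v \<in> M then \<tau> u * cnj (\<tau> v) * \<psi> (f u - f v) else 0))
        = cnj (\<tau> v) * \<psi> (- f v) * (\<Sum>u\<in>D v. \<tau> u * \<psi> (f u))" by (simp add: sum_distrib_left)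
  qed
  also have "\<dots> = (\<Sum>v\<in>V. cnj (\<tau> v) * \<psi> (- f v) * (\<Sum>u\<in>D v. \<tau> u * \<psi> (f u)))"
    by (rule sum.mono_neutral_right) (use V_sub Z_zero in auto)
  also have "\<dots> = (\<Sum>v\<in>V. \<Sum>m\<in>M. \<tau> (1 + m) * \<psi> (f (v * (1 + m)) - f v))"
    by (rule sum.cong[OF refl]) (rule Zval)
  also have "\<dots> = (\<Sum>m\<in>M. \<Sum>v\<in>V. \<tau> (1 + m) * \<psi> (f (v * (1 + m)) - f v))" by (rule sum.swap)
  also have "\<dots> = (\<Sum>m\<in>M. if m \<in> A then of_nat (card V) else 0)"
  proof (rule sum.cong[OF refl])
    fix m assume mM: "m \<in> M"
    show "(\<Sum>v\<in>V. \<tau> (1 + m) * \<psi> (f (v * (1 + m)) - f v)) = (if m \<in> A then of_nat (card V) else 0)"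
    proof (cases "m \<in> A")
      case True
      then have "\<And>v. v \<in> V \<Longrightarrow> \<tau> (1 + m) * \<psi> (f (v * (1 + m)) - f v) = 1"
        using tauA Va psi0 by simp
      then show ?thesis using True by simp
    next
      case False
      then show ?thesis using Vz[OF mM False] by (simp add: sum_distrib_left[symmetric])
    qed
  qed
  also have "\<dots> = (\<Sum>m\<in>M \<inter> A. of_nat (card V))" by (rule sum.inter_restrict[symmetric]) simp
  also have "M \<inter> A = A" using A_sub by blast
  finally show ?thesis by simp
qed

lemma unit_diff_iff:
  assumes u: "u \<in> units_r" and v: "v \<in> units_r"
  shows "a * (inv_r u - inv_r v) \<in> M \<longleftrightarrow> u - v \<in> M"
proof -
  define iu where "iu = inv_r u"
  define iv where "iv = inv_r v"
  have uiu: "u * iu = 1" unfolding iu_def using inv_r_mult[OF u] .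
  have viv: "v * iv = 1" unfolding iv_def using inv_r_mult[OF v] .
  have e1: "(iu - iv) * (u * v) = v - u"
  proof -
    have "(iu - iv) * (u * v) = (u * iu) * v - (v * iv) * u" by (simp add: algebra_simps)
    then show ?thesis using uiu viv by simp
  qed
  have e2: "(u - v) * (iu * iv) = iv - iu"
  proof -
    have "(u - v) * (iu * iv) = (u * iu) * iv - (v * iv) * iu" by (simp add: algebra_simps)
    then show ?thesis using uiu viv by simp
  qed
  show ?thesis unfolding iu_def[symmetric] iv_def[symmetric]
  proof
    assume "a * (iu - iv) \<in> M"
    then have "iu - iv \<in> M" using primeM aU unit_notin by blast
    then have "v - u \<in> M" using e1 Mmult2 by metis
    then show "u - v \<in> M" using Muminus by fastforce
  next
    assume "u - v \<in> M"
    then have "iv - iu \<in> M" using e2 Mmult2 by metis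
    then have "iu - iv \<in> M" using Muminus by fastforce
    then show "a * (iu - iv) \<in> M" using Mmult by blast
  qed
qed

lemma K_total:
  "(\<Sum>b\<in>(\<lambda>x. 1 + x) ` A. kloosterman \<psi> \<tau> (a * b) * cnj (kloosterman \<psi> \<tau> (a * b)))
    = of_nat (card A) * T"
proof -
  have inj: "inj_on (\<lambda>x. 1 + x) A" by (rule inj_onI) simp
  have "(\<Sum>b\<in>(\<lambda>x. 1 + x) ` A. kloosterman \<psi> \<tau> (a * b) * cnj (kloosterman \<psi> \<tau> (a * b)))
     = (\<Sum>x\<in>A. \<Sum>u\<in>units_r. \<Sum>v\<in>units_r. \<tau> u * cnj (\<tau> v) * (\<psi> (u + a * (1 + x) * inv_r u) * \<psi> (- (v + a * (1 + x) * inv_r v))))"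
    unfolding sum.reindex[OF inj] kloosterman_def
    by (simp add: sum_product psi_cnj algebra_simps)
  also have "\<dots> = (\<Sum>u\<in>units_r. \<Sum>x\<in>A. \<Sum>v\<in>units_r. \<tau> u * cnj (\<tau> v) * (\<psi> (u + a * (1 + x) * inv_r u) * \<psi> (- (v + a * (1 + x) * inv_r v))))"
    by (rule sum.swap)
  also have "\<dots> = (\<Sum>u\<in>units_r. \<Sum>v\<in>units_r. \<Sum>x\<in>A. \<tau> u * cnj (\<tau> v) * (\<psi> (u + a * (1 + x) * inv_r u) * \<psi> (- (v + a * (1 + x) * inv_r v))))"
    by (rule sum.cong[OF refl]) (rule sum.swap)
  also have "\<dots> = (\<Sum>u\<in>units_r. \<Sum>v\<in>units_r. of_nat (card A) * (if u - v \<in> M then \<tau> u * cnj (\<tau> v) * \<psi> (f u - f v) else 0))"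
  proof (intro sum.cong[OF refl])
    fix u v :: 'a assume u: "u \<in> units_r" and v: "v \<in> units_r"
    have "(\<Sum>x\<in>A. \<tau> u * cnj (\<tau> v) * (\<psi> (u + a * (1 + x) * inv_r u) * \<psi> (- (v + a * (1 + x) * inv_r v))))
        = (\<Sum>x\<in>A. \<tau> u * cnj (\<tau> v) * \<psi> (f u - f v) * \<psi> ((a * (inv_r u - inv_r v)) * x))"
    proof (rule sum.cong[OF refl])
      fix x :: 'a
      have "(u + a * (1 + x) * inv_r u) + (- (v + a * (1 + x) * inv_r v)) = (f u - f v) + (a * (inv_r u - inv_r v)) * x"
        unfolding f_def by (simp add: algebra_simps)
      then show "\<tau> u * cnj (\<tau> v) * (\<psi> (u + a * (1 + x) * inv_r u) * \<psi> (- (v + a * (1 + x) * inv_r v)))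
          = \<tau> u * cnj (\<tau> v) * \<psi> (f u - f v) * \<psi> ((a * (inv_r u - inv_r v)) * x)"
        using psi_add by (metis mult.assoc)
    qed
    also have "\<dots> = \<tau> u * cnj (\<tau> v) * \<psi> (f u - f v) * (\<Sum>x\<in>A. \<psi> ((a * (inv_r u - inv_r v)) * x))"
      by (simp add: sum_distrib_left)
    also have "\<dots> = of_nat (card A) * (if u - v \<in> M then \<tau> u * cnj (\<tau> v) * \<psi> (f u - f v) else 0)"
      unfolding sum_psi_B[OF A_ideal subset_refl A_ne] unit_diff_iff[OF u v] by simp
    finally show "(\<Sum>x\<in>A. \<tau> u * cnj (\<tau> v) * (\<psi> (u + a * (1 + x) * inv_r u) * \<psi> (- (v + a * (1 + x) * inv_r v))))
        = of_nat (card A) * (if u - v \<in> M then \<tau> u * cnj (\<tau> v) * \<psi> (f u - f v) else 0)" .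
  qed
  also have "\<dots> = of_nat (card A) * T" unfolding T_def by (simp add: sum_distrib_left)
  finally show ?thesis .
qed

end



context KL begin

lemma card_shift: "card {v. v - w \<in> M} = card M"
proof -
  have "bij_betw (\<lambda>m. m + w) M {v. v - w \<in> M}"
    by (rule bij_betw_byWitness[where f' = "\<lambda>v. v - w"]) auto
  then show ?thesis by (simp add: bij_betw_same_card)
qed

lemma card_V: "card V = (if \<exists>w. a - w * w \<in> M then 2 * card M else 0)"
proof (cases "\<exists>w. a - w * w \<in> M")
  case False
  have "V = {}"
  proof (rule ccontr)
    assume "V \<noteq> {}"
    then obtain v where "v * v - a \<in> M" unfolding V_def by blast
    then have "- (v * v - a) \<in> M" by (rule Muminus)
    then have "a - v * v \<in> M" by simp
    then show False using False by blast
  qed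
  then show ?thesis using False by simp
next
  case True
  then obtain w where w: "a - w * w \<in> M" by blast
  have wM: "w \<notin> M"
  proof
    assume "w \<in> M"
    then have "w * w \<in> M" by (rule Mmult)
    then have "(a - w * w) + w * w \<in> M" using w Madd by blast
    then show False using aU unit_notin by simp
  qed
  define D1 where "D1 = {v. v - w \<in> M}"
  define D2 where "D2 = {v. v - (- w) \<in> M}"
  have key: "\<And>v. v * v - a = (v - w) * (v - (- w)) - (a - w * w)" by (simp add: algebra_simps)
  have VD: "V = D1 \<union> D2"
  proof (intro equalityI subsetI)
    fix v assume "v \<in> V"
    then have "v * v - a \<in> M" unfolding V_def by blast
    then have "(v * v - a) + (a - w * w) \<in> M" using w Madd by blast
    moreover have "(v * v - a) + (a - w * w) = (v - w) * (v - (- w))" using key[of v] by simp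
    ultimately have "(v - w) * (v - (- w)) \<in> M" by simp
    then show "v \<in> D1 \<union> D2" unfolding D1_def D2_def using primeM by blast
  next
    fix v assume "v \<in> D1 \<union> D2"
    then have "(v - w) * (v - (- w)) \<in> M" unfolding D1_def D2_def using Mmult Mmult2 by blast
    then have "(v - w) * (v - (- w)) - (a - w * w) \<in> M" using w Mdiff by blast
    then show "v \<in> V" unfolding V_def mem_Collect_eq key[of v] .
  qed
  have disj: "D1 \<inter> D2 = {}"
  proof (rule ccontr)
    assume "D1 \<inter> D2 \<noteq> {}"
    then obtain v where v: "v - w \<in> M" "v - (- w) \<in> M" unfolding D1_def D2_def by blast
    have "(v - (- w)) - (v - w) \<in> M" using Mdiff[OF v(2) v(1)] .
    moreover have "(v - (- w)) - (v - w) = 2 * w" by (simp add: algebra_simps)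
    ultimately have "2 * w \<in> M" by simp
    then show False using primeM two_notin wM by blast
  qed
  have "card V = card D1 + card D2" unfolding VD by (rule card_Un_disjoint) (use disj in auto)
  also have "\<dots> = 2 * card M" unfolding D1_def D2_def card_shift by simp
  finally show ?thesis using True by simp
qed

lemma main_loc:
  "(1 / real (card A)) * (\<Sum>b\<in>(\<lambda>x. 1 + x) ` A. (cmod (kloosterman \<psi> \<tau> (a * b)))\<^sup>2)
     = real (card (UNIV :: 'a set)) * (1 + quad_char M a)"
proof -
  let ?S = "(\<Sum>b\<in>(\<lambda>x. 1 + x) ` A. (cmod (kloosterman \<psi> \<tau> (a * b)))\<^sup>2)"
  have "complex_of_real ?S = (\<Sum>b\<in>(\<lambda>x. 1 + x) ` A. kloosterman \<psi> \<tau> (a * b) * cnj (kloosterman \<psi> \<tau> (a * b)))"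
    by (simp only: of_real_sum complex_norm_square)
  also have "\<dots> = of_nat (card A) * T" by (rule K_total)
  also have "\<dots> = complex_of_real (real (card A * (card A * card V)))" unfolding T_val by simp
  finally have S: "?S = real (card A * (card A * card V))" by (simp only: of_real_eq_iff)
  have "A \<noteq> {}" using ideal_0[OF A_ideal] by blast
  then have Apos: "card A > 0" by (simp add: card_gt_0_iff)
  have "(1 / real (card A)) * ?S = real (card A * card V)" unfolding S using Apos by simp
  also have "\<dots> = real (card (UNIV :: 'a set)) * (1 + quad_char M a)"
  proof (cases "\<exists>w. a - w * w \<in> M")
    case True
    then have "card A * card V = 2 * card (UNIV :: 'a set)" using card_V card_A by simp
    then show ?thesis using True unfolding quad_char_def by simp
  next
    case False
    then show ?thesis using card_V unfolding quad_char_def by simp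
  qed
  finally show ?thesis .
qed

end

theorem mainTheorem9:
  fixes M :: "'a::{comm_ring_1, finite} set"
    and \<psi> \<tau> :: "'a \<Rightarrow> complex"
    and a :: 'a
  assumes "local_ring_with M"
    and "M \<noteq> {0}"
    and "odd (residue_char M)"
    and "primitive_additive_character \<psi>"
    and "mult_character \<tau>"
    and "\<not> primitive_mult_character M \<tau>"
    and "a \<in> units_r"
  shows "(1 / real (card (annihilator M))) *
           (\<Sum>b\<in>(\<lambda>x. 1 + x) ` annihilator M. (cmod (kloosterman \<psi> \<tau> (a * b)))\<^sup>2)
         = real (card (UNIV :: 'a set)) * (1 + quad_char M a)"
proof -
  interpret KL M \<psi> \<tau> a by (rule KL.intro) (rule assms)+
  show ?thesis by (rule main_loc)
qed



end
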